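(* Let $Q$ be a graph property that has an independence function or a clique function $f:\mathbb{N}\to\mathbb{N}$ such that there is a fixed $a\in\mathbb{N}$ with $f(n)\ge n/a$ for all $n\in\mathbb{N}$. Then the graph polynomial $P_Q$ is weakly distinguishing.
   Context: All graphs are finite and simple. A graph property is a class of graphs closed under isomorphism. For $A\subseteq V(G)$, $G[A]$ is the induced subgraph on $A$. A function $f:\mathbb{N}\to\mathbb{N}$ is an independence function (resp. clique function) for a property $Q$ if every graph $G\in Q$ has an independent set (resp. a clique) of size $f(|V(G)|)$. For a property $Q$, $P_Q(G;X)=\sum_{A\subseteq V(G):\, G[A]\in Q} X^{|A|}$. For a graph polynomial $P$ (an isomorphism-invariant map from graphs to polynomials), $G$ is $P$-unique if every graph $H$ with $P(G)=P(H)$ is isomorphic to $G$. Let $\mathcal{G}(n)$ be the set of isomorphism classes of graphs on $n$ vertices and $U_P(n)$ the set of $P$-unique graphs in $\mathcal{G}(n)$. $P$ is weakly distinguishing if $\lim_{n\to\infty}|U_P(n)|/|\mathcal{G}(n)|=0$. *)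

theory Defs
  imports Complex_Main "HOL-Computational_Algebra.Polynomial"
begin

type_synonym graph = "nat set \<times> nat set set"

definition verts :: "graph \<Rightarrow> nat set" where "verts G = fst G"
definition edges :: "graph \<Rightarrow> nat set set" where "edges G = snd G"

definition wf_graph :: "graph \<Rightarrow> bool" where
  "wf_graph G \<longleftrightarrow> finite (verts G) \<and>
     edges G \<subseteq> {{u, v} | u v. u \<in> verts G \<and> v \<in> verts G \<and> u \<noteq> v}"

definition graph_iso :: "graph \<Rightarrow> graph \<Rightarrow> bool" where
  "graph_iso G H \<longleftrightarrow> (\<exists>h. bij_betw h (verts G) (verts H) \<and>
     (\<forall>u\<in>verts G. \<forall>v\<in>verts G. {u, v} \<in> edges G \<longleftrightarrow> {h u, h v} \<in> edges H))"

definition graph_property :: "(graph \<Rightarrow> bool) \<Rightarrow> bool" where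
  "graph_property Q \<longleftrightarrow> (\<forall>G H. wf_graph G \<and> wf_graph H \<and> graph_iso G H \<longrightarrow> (Q G \<longleftrightarrow> Q H))"

definition induced :: "graph \<Rightarrow> nat set \<Rightarrow> graph" where
  "induced G A = (A, {e \<in> edges G. e \<subseteq> A})"

definition independent_set :: "graph \<Rightarrow> nat set \<Rightarrow> bool" where
  "independent_set G S \<longleftrightarrow> S \<subseteq> verts G \<and> (\<forall>u\<in>S. \<forall>v\<in>S. {u, v} \<notin> edges G)"

definition clique :: "graph \<Rightarrow> nat set \<Rightarrow> bool" where
  "clique G S \<longleftrightarrow> S \<subseteq> verts G \<and> (\<forall>u\<in>S. \<forall>v\<in>S. u \<noteq> v \<longrightarrow> {u, v} \<in> edges G)"

definition independence_function :: "(graph \<Rightarrow> bool) \<Rightarrow> (nat \<Rightarrow> nat) \<Rightarrow> bool" where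
  "independence_function Q f \<longleftrightarrow> (\<forall>G. wf_graph G \<and> Q G \<longrightarrow>
     (\<exists>S. independent_set G S \<and> card S = f (card (verts G))))"

definition clique_function :: "(graph \<Rightarrow> bool) \<Rightarrow> (nat \<Rightarrow> nat) \<Rightarrow> bool" where
  "clique_function Q f \<longleftrightarrow> (\<forall>G. wf_graph G \<and> Q G \<longrightarrow>
     (\<exists>S. clique G S \<and> card S = f (card (verts G))))"

definition PQ :: "(graph \<Rightarrow> bool) \<Rightarrow> graph \<Rightarrow> int poly" where
  "PQ Q G = (\<Sum>A \<in> {A. A \<subseteq> verts G \<and> Q (induced G A)}. monom 1 (card A))"

definition P_unique :: "(graph \<Rightarrow> 'b) \<Rightarrow> graph \<Rightarrow> bool" where
  "P_unique P G \<longleftrightarrow> (\<forall>H. wf_graph H \<and> P H = P G \<longrightarrow> graph_iso G H)"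

definition graphs_on :: "nat \<Rightarrow> graph set" where
  "graphs_on n = {G. wf_graph G \<and> verts G = {0..<n}}"

definition iso_classes :: "nat \<Rightarrow> graph set set" where
  "iso_classes n = graphs_on n // {(G, H). G \<in> graphs_on n \<and> H \<in> graphs_on n \<and> graph_iso G H}"

definition unique_classes :: "(graph \<Rightarrow> 'b) \<Rightarrow> nat \<Rightarrow> graph set set" where
  "unique_classes P n = {C \<in> iso_classes n. \<forall>G\<in>C. P_unique P G}"

definition weakly_distinguishing :: "(graph \<Rightarrow> 'b) \<Rightarrow> bool" where
  "weakly_distinguishing P \<longleftrightarrow>
     (\<lambda>n. real (card (unique_classes P n)) / real (card (iso_classes n))) \<longlonglongrightarrow> 0"

end

theory Submission
  imports Defs "HOL-Library.FuncSet" "HOL-Real_Asymp.Real_Asymp"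
begin


definition pairs :: "nat set \<Rightarrow> nat set set" where
  "pairs V = {e. e \<subseteq> V \<and> card e = 2}"

lemma pairs_eq: "{{u, v} | u v. u \<in> V \<and> v \<in> V \<and> u \<noteq> v} = pairs V"
  unfolding pairs_def by (auto simp: card_2_iff)

lemma card_pairs: "finite V \<Longrightarrow> card (pairs V) = card V choose 2"
  unfolding pairs_def by (rule n_subsets)

lemma finite_pairs: "finite V \<Longrightarrow> finite (pairs V)"
  unfolding pairs_def by (auto intro: finite_subset[of _ "Pow V"])

lemma graphs_on_eq: "graphs_on n = (\<lambda>E. ({0..<n}, E)) ` Pow (pairs {0..<n})"
proof -
  have "G \<in> graphs_on n \<longleftrightarrow> G \<in> (\<lambda>E. ({0..<n}, E)) ` Pow (pairs {0..<n})" for G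
    by (cases G) (auto simp: graphs_on_def wf_graph_def verts_def edges_def pairs_eq)
  then show ?thesis by blast
qed

lemma card_graphs_on: "card (graphs_on n) = 2 ^ (n choose 2)"
proof -
  have "inj_on (\<lambda>E. ({0..<n::nat}, E)) (Pow (pairs {0..<n}))" by (auto simp: inj_on_def)
  then show ?thesis unfolding graphs_on_eq
    by (simp add: card_image card_Pow card_pairs finite_pairs)
qed

lemma finite_graphs_on: "finite (graphs_on n)"
  unfolding graphs_on_eq by (simp add: finite_pairs)

definition R :: "nat \<Rightarrow> (graph \<times> graph) set" where
  "R n = {(G, H). G \<in> graphs_on n \<and> H \<in> graphs_on n \<and> graph_iso G H}"

lemma iso_refl: "graph_iso G G"
  unfolding graph_iso_def by (rule exI[of _ id]) auto

lemma iso_sym: assumes "graph_iso G H" shows "graph_iso H G"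
proof -
  obtain h where h: "bij_betw h (verts G) (verts H)"
    and e: "\<forall>u\<in>verts G. \<forall>v\<in>verts G. {u, v} \<in> edges G \<longleftrightarrow> {h u, h v} \<in> edges H"
    using assms unfolding graph_iso_def by blast
  let ?g = "inv_into (verts G) h"
  have g: "bij_betw ?g (verts H) (verts G)" using h by (rule bij_betw_inv_into)
  have "\<forall>u\<in>verts H. \<forall>v\<in>verts H. {u, v} \<in> edges H \<longleftrightarrow> {?g u, ?g v} \<in> edges G"
  proof (intro ballI)
    fix u v assume u: "u \<in> verts H" and v: "v \<in> verts H"
    have gu: "?g u \<in> verts G" "h (?g u) = u" using g u h
      by (auto simp: bij_betw_def intro: f_inv_into_f)
    have gv: "?g v \<in> verts G" "h (?g v) = v" using g v h
      by (auto simp: bij_betw_def intro: f_inv_into_f)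
    show "{u, v} \<in> edges H \<longleftrightarrow> {?g u, ?g v} \<in> edges G"
      using e gu gv by metis
  qed
  with g show ?thesis unfolding graph_iso_def by blast
qed

lemma iso_trans: assumes "graph_iso G H" "graph_iso H K" shows "graph_iso G K"
proof -
  obtain h where h: "bij_betw h (verts G) (verts H)"
    and e: "\<forall>u\<in>verts G. \<forall>v\<in>verts G. {u, v} \<in> edges G \<longleftrightarrow> {h u, h v} \<in> edges H"
    using assms unfolding graph_iso_def by blast
  obtain g where g: "bij_betw g (verts H) (verts K)"
    and e2: "\<forall>u\<in>verts H. \<forall>v\<in>verts H. {u, v} \<in> edges H \<longleftrightarrow> {g u, g v} \<in> edges K"
    using assms unfolding graph_iso_def by blast
  have "bij_betw (g \<circ> h) (verts G) (verts K)" using h g by (rule bij_betw_trans)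
  moreover have "\<forall>u\<in>verts G. \<forall>v\<in>verts G. {u, v} \<in> edges G \<longleftrightarrow> {(g\<circ>h) u, (g\<circ>h) v} \<in> edges K"
  proof (intro ballI)
    fix u v assume u: "u \<in> verts G" and v: "v \<in> verts G"
    have "h u \<in> verts H" "h v \<in> verts H" using h u v by (auto simp: bij_betw_def)
    then show "{u, v} \<in> edges G \<longleftrightarrow> {(g\<circ>h) u, (g\<circ>h) v} \<in> edges K"
      using e e2 u v by simp
  qed
  ultimately show ?thesis unfolding graph_iso_def by blast
qed

lemma equiv_R: "equiv (graphs_on n) (R n)"
  unfolding equiv_def refl_on_def sym_def trans_def R_def
  by (auto intro: iso_refl iso_sym iso_trans)

lemma iso_classes_R: "iso_classes n = graphs_on n // R n"
  unfolding iso_classes_def R_def by simp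

lemma finite_iso_classes: "finite (iso_classes n)"
  unfolding iso_classes_R
  by (rule finite_quotient[OF finite_graphs_on]) (auto simp: R_def)

lemma class_sub:
  assumes G: "G \<in> graphs_on n"
  shows "R n `` {G} \<subseteq> (\<lambda>h. ({0..<n}, (`) h ` edges G)) ` ({0..<n} \<rightarrow>\<^sub>E {0..<n})"
proof
  fix H assume "H \<in> R n `` {G}"
  then have H: "H \<in> graphs_on n" and iso: "graph_iso G H" by (auto simp: R_def)
  obtain h where h: "bij_betw h {0..<n} {0..<n}"
    and e: "\<forall>u\<in>{0..<n}. \<forall>v\<in>{0..<n}. {u, v} \<in> edges G \<longleftrightarrow> {h u, h v} \<in> edges H"
    using iso G H unfolding graph_iso_def graphs_on_def by auto
  let ?h = "restrict h {0..<n}"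
  have hP: "?h \<in> {0..<n} \<rightarrow>\<^sub>E {0..<n}" using h by (auto simp: bij_betw_def)
  have EG: "edges G \<subseteq> pairs {0..<n}" and EH: "edges H \<subseteq> pairs {0..<n}"
    using G H by (auto simp: graphs_on_def wf_graph_def pairs_eq)
  have "edges H = (`) ?h ` edges G"
  proof
    show "edges H \<subseteq> (`) ?h ` edges G"
    proof
      fix e assume eH: "e \<in> edges H"
      then obtain x y where xy: "e = {x, y}" "x \<in> {0..<n}" "y \<in> {0..<n}"
        using EH by (auto simp: pairs_def card_2_iff)
      have "x \<in> h ` {0..<n}" "y \<in> h ` {0..<n}" using h xy by (auto simp: bij_betw_def)
      then obtain u v where u: "u \<in> {0..<n}" "h u = x" and v: "v \<in> {0..<n}" "h v = y" by blast
      have "{u, v} \<in> edges G" using e u v eH xy by auto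
      moreover have "?h ` {u, v} = e" using u v xy by auto
      ultimately show "e \<in> (`) ?h ` edges G" by blast
    qed
  next
    show "(`) ?h ` edges G \<subseteq> edges H"
    proof
      fix e' assume "e' \<in> (`) ?h ` edges G"
      then obtain e where eG: "e \<in> edges G" and e': "e' = ?h ` e" by blast
      then obtain u v where uv: "e = {u, v}" "u \<in> {0..<n}" "v \<in> {0..<n}"
        using EG by (auto simp: pairs_def card_2_iff)
      have "e' = {h u, h v}" using uv e' by auto
      then show "e' \<in> edges H" using e uv eG by auto
    qed
  qed
  moreover have "verts H = {0..<n}" using H by (auto simp: graphs_on_def)
  ultimately have "H = ({0..<n}, (`) ?h ` edges G)"
    by (cases H) (simp add: verts_def edges_def)
  with hP show "H \<in> (\<lambda>h. ({0..<n}, (`) h ` edges G)) ` ({0..<n} \<rightarrow>\<^sub>E {0..<n})" by blast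
qed

lemma card_class_le:
  assumes G: "G \<in> graphs_on n"
  shows "card (R n `` {G}) \<le> n ^ n"
proof -
  have "card (R n `` {G}) \<le> card ((\<lambda>h. ({0..<n}, (`) h ` edges G)) ` ({0..<n} \<rightarrow>\<^sub>E {0..<n}))"
    by (rule card_mono[OF _ class_sub[OF G]]) (auto intro: finite_PiE)
  also have "\<dots> \<le> card ({0..<n} \<rightarrow>\<^sub>E {0..<n::nat})" by (metis card_image_le finite_PiE finite_atLeastLessThan)
  also have "\<dots> = n ^ n" by (simp add: card_PiE)
  finally show ?thesis .
qed

lemma iso_lower: "2 ^ (n choose 2) \<le> card (iso_classes n) * n ^ n"
proof -
  have "2 ^ (n choose 2) = card (\<Union>(iso_classes n))"
    using Union_quotient[OF equiv_R] by (simp add: iso_classes_R card_graphs_on)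
  also have "\<dots> \<le> sum card (iso_classes n)"
    by (rule card_Union_le_sum_card)
  also have "\<dots> \<le> sum (\<lambda>_. n ^ n) (iso_classes n)"
    by (rule sum_mono) (auto simp: iso_classes_R quotient_def intro: card_class_le)
  also have "\<dots> = card (iso_classes n) * n ^ n" by simp
  finally show ?thesis .
qed



definition badg :: "nat \<Rightarrow> nat \<Rightarrow> graph \<Rightarrow> bool" where
  "badg n s G \<longleftrightarrow> (\<exists>S. S \<subseteq> {0..<n} \<and> card S = s \<and>
     ((\<forall>u\<in>S. \<forall>v\<in>S. {u, v} \<notin> edges G) \<or> (\<forall>u\<in>S. \<forall>v\<in>S. u \<noteq> v \<longrightarrow> {u, v} \<in> edges G)))"

lemma pairs_mono: "A \<subseteq> V \<Longrightarrow> pairs A \<subseteq> pairs V"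
  unfolding pairs_def by auto

lemma card_Pow_diff:
  assumes "A \<subseteq> {0..<n}" "card A = s"
  shows "card (Pow (pairs {0..<n} - pairs A)) = 2 ^ ((n choose 2) - (s choose 2))"
proof -
  have fA: "finite A" using assms finite_subset by blast
  have "card (pairs {0..<n} - pairs A) = card (pairs {0..<n}) - card (pairs A)"
    by (rule card_Diff_subset) (auto simp: fA finite_pairs pairs_mono assms)
  also have "\<dots> = (n choose 2) - (s choose 2)" using fA assms by (simp add: card_pairs)
  moreover have "finite (pairs {0..<n} - pairs A)" by (simp add: finite_pairs)
  ultimately show ?thesis
    by (metis card_Pow)
qed

lemma indep_sub:
  assumes "A \<subseteq> {0..<n}"
  shows "{G \<in> graphs_on n. \<forall>u\<in>A. \<forall>v\<in>A. {u, v} \<notin> edges G}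
    \<subseteq> (\<lambda>E. ({0..<n}, E)) ` Pow (pairs {0..<n} - pairs A)"
proof
  fix G assume G: "G \<in> {G \<in> graphs_on n. \<forall>u\<in>A. \<forall>v\<in>A. {u, v} \<notin> edges G}"
  then obtain E where GE: "G = ({0..<n}, E)" "E \<subseteq> pairs {0..<n}"
    unfolding graphs_on_eq by blast
  have "E \<inter> pairs A = {}"
  proof (rule ccontr)
    assume "E \<inter> pairs A \<noteq> {}"
    then obtain e where "e \<in> E" "e \<in> pairs A" by blast
    then obtain u v where "e = {u, v}" "u \<in> A" "v \<in> A" by (auto simp: pairs_def card_2_iff)
    with G GE \<open>e \<in> E\<close> show False by (auto simp: edges_def)
  qed
  with GE show "G \<in> (\<lambda>E. ({0..<n}, E)) ` Pow (pairs {0..<n} - pairs A)" by blast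
qed

lemma clique_sub:
  assumes "A \<subseteq> {0..<n}"
  shows "{G \<in> graphs_on n. \<forall>u\<in>A. \<forall>v\<in>A. u \<noteq> v \<longrightarrow> {u, v} \<in> edges G}
    \<subseteq> (\<lambda>F. ({0..<n}, F \<union> pairs A)) ` Pow (pairs {0..<n} - pairs A)"
proof
  fix G assume G: "G \<in> {G \<in> graphs_on n. \<forall>u\<in>A. \<forall>v\<in>A. u \<noteq> v \<longrightarrow> {u, v} \<in> edges G}"
  then obtain E where GE: "G = ({0..<n}, E)" "E \<subseteq> pairs {0..<n}"
    unfolding graphs_on_eq by blast
  have "pairs A \<subseteq> E"
  proof
    fix e assume "e \<in> pairs A"
    then obtain u v where "e = {u, v}" "u \<in> A" "v \<in> A" "u \<noteq> v" by (auto simp: pairs_def card_2_iff)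
    with G GE show "e \<in> E" by (auto simp: edges_def)
  qed
  then have "E = (E - pairs A) \<union> pairs A" by blast
  with GE show "G \<in> (\<lambda>F. ({0..<n}, F \<union> pairs A)) ` Pow (pairs {0..<n} - pairs A)" by blast
qed

lemma card_bad:
  "card {G \<in> graphs_on n. badg n s G} \<le> (n choose s) * (2 * 2 ^ ((n choose 2) - (s choose 2)))"
proof -
  let ?I = "\<lambda>A. {G \<in> graphs_on n. \<forall>u\<in>A. \<forall>v\<in>A. {u, v} \<notin> edges G}"
  let ?K = "\<lambda>A. {G \<in> graphs_on n. \<forall>u\<in>A. \<forall>v\<in>A. u \<noteq> v \<longrightarrow> {u, v} \<in> edges G}"
  let ?S = "{A. A \<subseteq> {0..<n} \<and> card A = s}"
  have sub: "{G \<in> graphs_on n. badg n s G} \<subseteq> (\<Union>A\<in>?S. ?I A \<union> ?K A)"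
    unfolding badg_def by blast
  have fin: "finite (\<Union>A\<in>?S. ?I A \<union> ?K A)"
    by (rule finite_subset[OF _ finite_graphs_on[of n]]) blast
  have cI: "card (?I A) \<le> 2 ^ ((n choose 2) - (s choose 2))" if "A \<in> ?S" for A
  proof -
    have "card (?I A) \<le> card ((\<lambda>E. ({0..<n}, E)) ` Pow (pairs {0..<n} - pairs A))"
      using that by (intro card_mono indep_sub) (auto simp: finite_pairs)
    also have "\<dots> \<le> card (Pow (pairs {0..<n} - pairs A))" by (rule card_image_le) (simp add: finite_pairs)
    finally show ?thesis using card_Pow_diff that by simp
  qed
  have cK: "card (?K A) \<le> 2 ^ ((n choose 2) - (s choose 2))" if "A \<in> ?S" for A
  proof -
    have "card (?K A) \<le> card ((\<lambda>F. ({0..<n}, F \<union> pairs A)) ` Pow (pairs {0..<n} - pairs A))"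
      using that by (intro card_mono clique_sub) (auto simp: finite_pairs)
    also have "\<dots> \<le> card (Pow (pairs {0..<n} - pairs A))" by (rule card_image_le) (simp add: finite_pairs)
    finally show ?thesis using card_Pow_diff that by simp
  qed
  have "card {G \<in> graphs_on n. badg n s G} \<le> card (\<Union>A\<in>?S. ?I A \<union> ?K A)"
    by (rule card_mono[OF fin sub])
  also have "\<dots> \<le> (\<Sum>A\<in>?S. card (?I A \<union> ?K A))" by (rule card_UN_le) (simp add: finite_subset)
  also have "\<dots> \<le> (\<Sum>A\<in>?S. 2 * 2 ^ ((n choose 2) - (s choose 2)))"
  proof (rule sum_mono)
    fix A assume A: "A \<in> ?S"
    have "card (?I A \<union> ?K A) \<le> card (?I A) + card (?K A)" by (rule card_Un_le)
    also have "\<dots> \<le> 2 * 2 ^ ((n choose 2) - (s choose 2))" using cI[OF A] cK[OF A] by simp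
    finally show "card (?I A \<union> ?K A) \<le> 2 * 2 ^ ((n choose 2) - (s choose 2))" .
  qed
  also have "\<dots> = (n choose s) * (2 * 2 ^ ((n choose 2) - (s choose 2)))"
    by (simp add: n_subsets)
  finally show ?thesis .
qed

lemma coeff_PQ:
  assumes "finite (verts G)"
  shows "coeff (PQ Q G) k = int (card {A. A \<subseteq> verts G \<and> Q (induced G A) \<and> card A = k})"
proof -
  let ?S = "{A. A \<subseteq> verts G \<and> Q (induced G A)}"
  have fS: "finite ?S" proof (rule finite_subset)
    show "?S \<subseteq> Pow (verts G)" by blast
    show "finite (Pow (verts G))" using assms by simp
  qed
  have "coeff (PQ Q G) k = (\<Sum>A\<in>?S. if card A = k then 1 else 0)"
    unfolding PQ_def by (simp add: coeff_sum coeff_monom)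
  also have "\<dots> = (\<Sum>A\<in>{A \<in> ?S. card A = k}. 1)"
    using sum.inter_filter[OF fS, of "\<lambda>_. 1::int" "\<lambda>A. card A = k"] by simp
  also have "\<dots> = int (card {A \<in> ?S. card A = k})" by simp
  also have "{A \<in> ?S. card A = k} = {A. A \<subseteq> verts G \<and> Q (induced G A) \<and> card A = k}" by blast
  finally show ?thesis .
qed

definition Ps :: "nat \<Rightarrow> nat \<Rightarrow> int poly set" where
  "Ps n M = {p. (\<forall>k. 0 \<le> coeff p k \<and> coeff p k \<le> 2 ^ n) \<and> (\<forall>k\<ge>M. coeff p k = 0)}"

lemma card_Ps: "finite (Ps n M) \<and> card (Ps n M) \<le> (2 ^ n + 1) ^ M"
proof -
  let ?f = "\<lambda>p. restrict (coeff p) {0..<M}"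
  let ?B = "{0..<M} \<rightarrow>\<^sub>E {0..(2::int) ^ n}"
  have inj: "inj_on ?f (Ps n M)"
  proof (rule inj_onI)
    fix p q assume p: "p \<in> Ps n M" and q: "q \<in> Ps n M" and e: "?f p = ?f q"
    show "p = q"
    proof (rule poly_eqI)
      fix k show "coeff p k = coeff q k"
      proof (cases "k < M")
        case True then show ?thesis using fun_cong[OF e, of k] by simp
      next
        case False then show ?thesis using p q by (simp add: Ps_def)
      qed
    qed
  qed
  have im: "?f ` Ps n M \<subseteq> ?B" by (auto simp: Ps_def)
  have fB: "finite ?B" by (intro finite_PiE) auto
  have "card ?B = (2 ^ n + 1) ^ M"
    by (simp add: card_PiE nat_add_distrib nat_power_eq)
  then show ?thesis using card_inj_on_le[OF inj im fB] inj_on_finite[OF inj im fB] by simp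
qed



lemma good_small:
  assumes hfun: "independence_function Q f \<or> clique_function Q f" and a1: "a \<ge> 1"
    and fa: "\<forall>n. real (f n) \<ge> real n / real a"
    and G: "G \<in> graphs_on n" and nb: "\<not> badg n s G" and A: "A \<subseteq> verts G"
    and QA: "Q (induced G A)"
  shows "card A < a * s"
proof (rule ccontr)
  assume "\<not> card A < a * s"
  then have as: "a * s \<le> card A" by simp
  have V: "verts G = {0..<n}" and wfG: "wf_graph G" using G by (auto simp: graphs_on_def)
  have fA: "finite A" using A V finite_subset by auto
  have wfA: "wf_graph (induced G A)"
    using wfG fA unfolding wf_graph_def induced_def verts_def edges_def pairs_eq
    by (auto simp: pairs_def)
  have vA: "verts (induced G A) = A" and eA: "edges (induced G A) = {e \<in> edges G. e \<subseteq> A}"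
    by (auto simp: induced_def verts_def edges_def)
  have "real (a * s) \<le> real (card A)" using as by (simp only: of_nat_le_iff)
  then have "real a * real s \<le> real (card A)" by simp
  then have "real s \<le> real (card A) / real a"
    using a1 by (simp add: field_simps)
  also have "\<dots> \<le> real (f (card A))" using fa by simp
  finally have sf: "s \<le> f (card A)" by simp
  from hfun show False
  proof
    assume "independence_function Q f"
    then have "\<exists>S. independent_set (induced G A) S \<and> card S = f (card (verts (induced G A)))"
      using wfA QA unfolding independence_function_def by blast
    then obtain S where S: "independent_set (induced G A) S" "card S = f (card A)"
      using vA by auto
    have "s \<le> card S" using S sf by simp
    then obtain T where T: "T \<subseteq> S" "card T = s" by (rule obtain_subset_with_card_n)
    have "T \<subseteq> {0..<n}" using T S vA A V by (auto simp: independent_set_def)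
    moreover have "\<forall>u\<in>T. \<forall>v\<in>T. {u, v} \<notin> edges G"
    proof (intro ballI)
      fix u v assume "u \<in> T" "v \<in> T"
      then have uv: "u \<in> S" "v \<in> S" using T by auto
      then have "{u, v} \<notin> edges (induced G A)" using S(1) unfolding independent_set_def by blast
      moreover have "{u, v} \<subseteq> A" using uv S(1) vA unfolding independent_set_def by auto
      ultimately show "{u, v} \<notin> edges G" using eA by auto
    qed
    ultimately show False using nb T unfolding badg_def by blast
  next
    assume "clique_function Q f"
    then have "\<exists>S. clique (induced G A) S \<and> card S = f (card (verts (induced G A)))"
      using wfA QA unfolding clique_function_def by blast
    then obtain S where S: "clique (induced G A) S" "card S = f (card A)"
      using vA by auto
    have "s \<le> card S" using S sf by simp
    then obtain T where T: "T \<subseteq> S" "card T = s" by (rule obtain_subset_with_card_n)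
    have "T \<subseteq> {0..<n}" using T S vA A V by (auto simp: clique_def)
    moreover have "\<forall>u\<in>T. \<forall>v\<in>T. u \<noteq> v \<longrightarrow> {u, v} \<in> edges G"
    proof (intro ballI impI)
      fix u v assume "u \<in> T" "v \<in> T" "u \<noteq> v"
      then have uv: "u \<in> S" "v \<in> S" "u \<noteq> v" using T by auto
      then have "{u, v} \<in> edges (induced G A)" using S(1) unfolding clique_def by blast
      then show "{u, v} \<in> edges G" using eA by auto
    qed
    ultimately show False using nb T unfolding badg_def by blast
  qed
qed

lemma key:
  assumes hfun: "independence_function Q f \<or> clique_function Q f" and a1: "a \<ge> 1"
    and fa: "\<forall>n. real (f n) \<ge> real n / real a"
  shows "card (unique_classes (PQ Q) n) \<le>
    (n choose s) * (2 * 2 ^ ((n choose 2) - (s choose 2))) + (2 ^ n + 1) ^ (a * s)"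
proof -
  let ?U = "unique_classes (PQ Q) n"
  define rep where "rep C = (SOME G. G \<in> C)" for C :: "graph set"
  have eqv: "equiv (graphs_on n) (R n)" by (rule equiv_R)
  have repC: "rep C \<in> C" if "C \<in> iso_classes n" for C
  proof -
    from that obtain G where "G \<in> graphs_on n" "C = R n `` {G}"
      by (auto simp: iso_classes_R quotient_def)
    then have "G \<in> C" using equiv_class_self[OF eqv] by simp
    then show ?thesis unfolding rep_def by (rule someI)
  qed
  have Csub: "C \<subseteq> graphs_on n" if "C \<in> iso_classes n" for C
    using that by (auto simp: iso_classes_R quotient_def R_def)
  have Uiso: "?U \<subseteq> iso_classes n" by (auto simp: unique_classes_def)
  have rep_inj: "C1 = C2" if "C1 \<in> iso_classes n" "C2 \<in> iso_classes n" "x \<in> C1" "x \<in> C2" for C1 C2 x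
    using quotient_disj[OF eqv, of C1 C2] that by (auto simp: iso_classes_R)
  let ?Ub = "{C \<in> ?U. badg n s (rep C)}"
  let ?Ug = "{C \<in> ?U. \<not> badg n s (rep C)}"
  have finU: "finite ?U" using finite_iso_classes Uiso finite_subset by blast
  have "card ?U \<le> card ?Ub + card ?Ug"
  proof -
    have "?U = ?Ub \<union> ?Ug" by blast
    then show ?thesis using card_Un_le[of ?Ub ?Ug] by simp
  qed
  moreover have "card ?Ub \<le> card {G \<in> graphs_on n. badg n s G}"
  proof (rule card_inj_on_le[of rep])
    show "inj_on rep ?Ub"
    proof (rule inj_onI)
      fix C1 C2 assume C1: "C1 \<in> ?Ub" and C2: "C2 \<in> ?Ub" and e: "rep C1 = rep C2"
      have i1: "C1 \<in> iso_classes n" and i2: "C2 \<in> iso_classes n" using C1 C2 Uiso by auto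
      show "C1 = C2" using rep_inj[OF i1 i2 repC[OF i1]] repC[OF i2] e by simp
    qed
    show "rep ` ?Ub \<subseteq> {G \<in> graphs_on n. badg n s G}"
    proof
      fix G assume "G \<in> rep ` ?Ub"
      then obtain C where C: "C \<in> ?Ub" and GC: "G = rep C" by blast
      have iC: "C \<in> iso_classes n" using C Uiso by auto
      have "G \<in> graphs_on n" using Csub[OF iC] repC[OF iC] GC by auto
      moreover have "badg n s G" using C GC by simp
      ultimately show "G \<in> {G \<in> graphs_on n. badg n s G}" by simp
    qed
    show "finite {G \<in> graphs_on n. badg n s G}" using finite_graphs_on by simp
  qed
  moreover have "card ?Ug \<le> card (Ps n (a * s))"
  proof (rule card_inj_on_le[of "\<lambda>C. PQ Q (rep C)"])
    show "inj_on (\<lambda>C. PQ Q (rep C)) ?Ug"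
    proof (rule inj_onI)
      fix C1 C2 assume C1: "C1 \<in> ?Ug" and C2: "C2 \<in> ?Ug" and e: "PQ Q (rep C1) = PQ Q (rep C2)"
      have i1: "C1 \<in> iso_classes n" and i2: "C2 \<in> iso_classes n" using C1 C2 Uiso by auto
      have pu: "P_unique (PQ Q) (rep C1)" using C1 repC[OF i1] by (auto simp: unique_classes_def)
      have "wf_graph (rep C2)" using Csub[OF i2] repC[OF i2] by (auto simp: graphs_on_def)
      then have "wf_graph (rep C2) \<and> PQ Q (rep C2) = PQ Q (rep C1)" using e by simp
      then have "graph_iso (rep C1) (rep C2)" using pu unfolding P_unique_def by blast
      then have "(rep C1, rep C2) \<in> R n"
        using Csub[OF i1] Csub[OF i2] repC[OF i1] repC[OF i2] by (auto simp: R_def)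
      then have "rep C2 \<in> C1"
        using in_quotient_imp_closed[OF eqv, of C1 "rep C1" "rep C2"] i1 repC[OF i1]
        by (simp add: iso_classes_R)
      then show "C1 = C2" using rep_inj[OF i1 i2 _ repC[OF i2]] by blast
    qed
    show "(\<lambda>C. PQ Q (rep C)) ` ?Ug \<subseteq> Ps n (a * s)"
    proof
      fix p assume "p \<in> (\<lambda>C. PQ Q (rep C)) ` ?Ug"
      then obtain C where C: "C \<in> ?Ug" and p: "p = PQ Q (rep C)" by blast
      have iC: "C \<in> iso_classes n" using C Uiso by auto
      let ?G = "rep C"
      have G: "?G \<in> graphs_on n" using Csub[OF iC] repC[OF iC] by blast
      have V: "verts ?G = {0..<n}" using G by (simp add: graphs_on_def)
      have nb: "\<not> badg n s ?G" using C by simp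
      have cf: "coeff p k = int (card {A. A \<subseteq> verts ?G \<and> Q (induced ?G A) \<and> card A = k})" for k
        using p V coeff_PQ by simp
      have bnd: "coeff p k \<le> 2 ^ n" for k
      proof -
        have "card {A. A \<subseteq> verts ?G \<and> Q (induced ?G A) \<and> card A = k} \<le> card (Pow {0..<n})"
          by (rule card_mono) (auto simp: V)
        then show ?thesis using cf[of k] by (simp add: card_Pow)
      qed
      have zero: "coeff p k = 0" if "k \<ge> a * s" for k
      proof -
        have "{A. A \<subseteq> verts ?G \<and> Q (induced ?G A) \<and> card A = k} = {}"
        proof -
          have False if "A \<subseteq> verts ?G" "Q (induced ?G A)" "card A = k" for A
          proof -
            have "card A < a * s" by (rule good_small[OF hfun a1 fa G nb that(1,2)])
            then show False using that(3) \<open>k \<ge> a * s\<close> by simp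
          qed
          then show ?thesis by blast
        qed
        then have "coeff p k = int (card ({}::nat set set))" using cf[of k] by (simp only:)
        then show ?thesis by simp
      qed
      show "p \<in> Ps n (a * s)" using bnd zero cf unfolding Ps_def by simp
    qed
    show "finite (Ps n (a * s))" using card_Ps by blast
  qed
  moreover have "card (Ps n (a * s)) \<le> (2 ^ n + 1) ^ (a * s)" using card_Ps by blast
  ultimately show ?thesis using card_bad[of n s] by linarith
qed



lemma choose2_real: "real (m choose 2) = real m * (real m - 1) / 2"
  by (induction m) (auto simp: numeral_2_eq_2 field_simps)

lemma asym_bound:
  fixes n a u ci s :: nat
  assumes a1: "a \<ge> 1" and n8: "n \<ge> 8 * a"
    and hu: "u \<le> (n choose s) * (2 * 2 ^ ((n choose 2) - (s choose 2))) + (2 ^ n + 1) ^ (a * s)"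
    and hc: "2 ^ (n choose 2) \<le> ci * n ^ n"
    and hs: "s = n div (4 * a)"
  shows "real u / real ci \<le> real n ^ n * (2 powr (real n + 1) *
      2 powr (-((real n / (4 * real a) - 1) * (real n / (4 * real a) - 2) / 2)))
    + real n ^ n * 2 powr ((3 * real n - real n ^ 2) / 4)"
proof -
  define N where "N = n choose 2"
  define \<sigma> where "\<sigma> = s choose 2"
  define M where "M = a * s"
  define x where "x = real n / (4 * real a)"
  have n1: "n \<ge> 8" using n8 a1 by linarith
  have nn: "real n ^ n > 0" using n1 by simp
  have ci0: "ci > 0" using hc by (metis less_numeral_extra(3) mult_is_0 neq0_conv power_not_zero zero_neq_numeral le_0_eq)
  have sn: "s \<le> n" using hs by simp
  have rN: "real N = real n * (real n - 1) / 2" unfolding N_def by (rule choose2_real)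
  have rs: "real \<sigma> = real s * (real s - 1) / 2" unfolding \<sigma>_def by (rule choose2_real)
  have sN: "\<sigma> \<le> N"
  proof -
    have "real s * (real s - 1) \<le> real n * (real n - 1)"
    proof -
      have "0 \<le> (real n - real s) * (real n + real s - 1)" using sn n1 by (intro mult_nonneg_nonneg) auto
      then show ?thesis by (simp add: algebra_simps)
    qed
    then have "real \<sigma> \<le> real N" using rs rN by simp
    then show ?thesis by simp
  qed
  have a0: "real a > 0" using a1 by simp
  have s_lb: "real s \<ge> x - 1"
  proof -
    have m: "n mod (4 * a) < 4 * a" using a1 by simp
    have "n = 4 * a * s + n mod (4 * a)" using hs by simp
    then have "n < 4 * a * (s + 1)" using m by (simp add: algebra_simps)
    then have "real n < real (4 * a * (s + 1))" by (simp only: of_nat_less_iff)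
    then have "real n < 4 * real a * (real s + 1)" by (simp add: algebra_simps)
    then show ?thesis unfolding x_def using a0 by (simp add: field_simps)
  qed
  have x2: "x \<ge> 2"
  proof -
    have "real (8 * a) \<le> real n" using n8 by (simp only: of_nat_le_iff)
    then show ?thesis unfolding x_def using a0 by (simp add: field_simps)
  qed
  have M4: "4 * real M \<le> real n"
  proof -
    have "n div (4 * a) * (4 * a) \<le> n" using div_mult_mod_eq[of n "4 * a"] by linarith
    then have "4 * M \<le> n" unfolding M_def hs by (simp add: algebra_simps)
    then have "real (4 * M) \<le> real n" by (simp only: of_nat_le_iff)
    then show ?thesis by simp
  qed
  have t1: "real ((n choose s) * (2 * 2 ^ (N - \<sigma>))) \<le> 2 powr (real n + 1 + real N - real \<sigma>)"
  proof -
    have "real (n choose s) \<le> real ((2::nat) ^ n)"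
      using binomial_le_pow2[of n s] by (simp only: of_nat_le_iff)
    also have "\<dots> = 2 powr real n" by (simp add: powr_realpow)
    finally have "real (n choose s) \<le> 2 powr real n" .
    moreover have "real (2 * 2 ^ (N - \<sigma>)) = 2 powr (1 + real N - real \<sigma>)"
    proof -
      have e: "2 powr (1 + real N - real \<sigma>) = 2 powr 1 * 2 powr (real N - real \<sigma>)"
        by (subst powr_add[symmetric]) (simp add: algebra_simps)
      show ?thesis using sN by (simp add: e powr_realpow[symmetric] of_nat_diff)
    qed
    ultimately have "real ((n choose s) * (2 * 2 ^ (N - \<sigma>))) \<le> 2 powr real n * 2 powr (1 + real N - real \<sigma>)"
      by (simp only: of_nat_mult) (intro mult_right_mono, simp_all)
    also have "\<dots> = 2 powr (real n + 1 + real N - real \<sigma>)" by (simp add: powr_add[symmetric] algebra_simps)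
    finally show ?thesis .
  qed
  have t2: "real ((2 ^ n + 1) ^ M) \<le> 2 powr ((real n + 1) * real M)"
  proof -
    have "(2 ^ n + 1 :: nat) ^ M \<le> (2 ^ (n + 1)) ^ M" by (intro power_mono) auto
    also have "\<dots> = 2 ^ ((n + 1) * M)" by (rule power_mult[symmetric])
    finally have "real ((2 ^ n + 1) ^ M) \<le> real ((2::nat) ^ ((n + 1) * M))" by (simp only: of_nat_le_iff)
    also have "\<dots> = 2 powr ((real n + 1) * real M)" by (simp add: powr_realpow[symmetric] algebra_simps)
    finally show ?thesis .
  qed
  have hu': "real u \<le> 2 powr (real n + 1 + real N - real \<sigma>) + 2 powr ((real n + 1) * real M)"
  proof -
    have "u \<le> (n choose s) * (2 * 2 ^ (N - \<sigma>)) + (2 ^ n + 1) ^ M" using hu by (simp only: N_def \<sigma>_def M_def)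
    then have "real u \<le> real ((n choose s) * (2 * 2 ^ (N - \<sigma>))) + real ((2 ^ n + 1) ^ M)"
      by (simp only: of_nat_le_iff of_nat_add[symmetric])
    then show ?thesis using t1 t2 by linarith
  qed
  have pN: "2 powr real N > 0" by simp
  have hc': "2 powr real N \<le> real ci * real n ^ n"
  proof -
    have "real ((2::nat) ^ N) \<le> real (ci * n ^ n)" using hc unfolding N_def[symmetric] by (simp only: of_nat_le_iff)
    then show ?thesis by (simp add: powr_realpow)
  qed
  have "real u / real ci = real u * real n ^ n / (real ci * real n ^ n)" using nn by simp
  also have "\<dots> \<le> real u * real n ^ n / 2 powr real N"
    by (rule divide_left_mono[OF hc']) (use nn pN ci0 in auto)
  also have "\<dots> = real n ^ n * (real u / 2 powr real N)" by simp
  also have "\<dots> \<le> real n ^ n * (2 powr (real n + 1 - real \<sigma>) + 2 powr ((real n + 1) * real M - real N))"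
  proof (rule mult_left_mono)
    have "real u / 2 powr real N \<le> (2 powr (real n + 1 + real N - real \<sigma>) + 2 powr ((real n + 1) * real M)) / 2 powr real N"
      using hu' pN by (simp add: divide_right_mono)
    also have "\<dots> = 2 powr (real n + 1 - real \<sigma>) + 2 powr ((real n + 1) * real M - real N)"
      by (simp add: add_divide_distrib powr_diff[symmetric] algebra_simps)
    finally show "real u / 2 powr real N \<le> 2 powr (real n + 1 - real \<sigma>) + 2 powr ((real n + 1) * real M - real N)" .
  qed (use nn in simp)
  also have "\<dots> \<le> real n ^ n * (2 powr (real n + 1 - (x - 1) * (x - 2) / 2) + 2 powr ((3 * real n - real n ^ 2) / 4))"
  proof (intro mult_left_mono add_mono)
    have "(x - 1) * (x - 2) \<le> real s * (real s - 1)" using s_lb x2 by (intro mult_mono) auto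
    then have "(x - 1) * (x - 2) / 2 \<le> real \<sigma>" using rs by simp
    then show "2 powr (real n + 1 - real \<sigma>) \<le> 2 powr (real n + 1 - (x - 1) * (x - 2) / 2)" by simp
    have "(real n + 1) * real M \<le> (real n + 1) * (real n / 4)" using M4 by (intro mult_left_mono) auto
    then have "(real n + 1) * real M - real N \<le> (3 * real n - real n ^ 2) / 4"
      using rN by (simp add: field_simps power2_eq_square)
    then show "2 powr ((real n + 1) * real M - real N) \<le> 2 powr ((3 * real n - real n ^ 2) / 4)" by simp
  qed (use nn in simp)
  also have "\<dots> = real n ^ n * (2 powr (real n + 1) * 2 powr (-((x - 1) * (x - 2) / 2)))
    + real n ^ n * 2 powr ((3 * real n - real n ^ 2) / 4)"
    by (simp add: powr_add[symmetric] algebra_simps)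
  finally show ?thesis unfolding x_def .
qed



theorem theorem3:
  fixes Q :: "graph \<Rightarrow> bool" and f :: "nat \<Rightarrow> nat" and a :: nat
  assumes "graph_property Q"
    and "independence_function Q f \<or> clique_function Q f"
    and "a \<ge> 1"
    and "\<forall>n. real (f n) \<ge> real n / real a"
  shows "weakly_distinguishing (PQ Q)"
proof -
  have a0: "real a > 0" using assms(3) by simp
  define B where "B = (\<lambda>n::nat. real n ^ n * (2 powr (real n + 1) *
      2 powr (-((real n / (4 * real a) - 1) * (real n / (4 * real a) - 2) / 2)))
    + real n ^ n * 2 powr ((3 * real n - real n ^ 2) / 4))"
  define c where "c = 1 / (4 * real a)"
  have c0: "c > 0" using a0 unfolding c_def by simp
  have l1: "(\<lambda>n::nat. real n ^ n * (2 powr (real n + 1) *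
      2 powr (-((c * real n - 1) * (c * real n - 2) / 2)))) \<longlonglongrightarrow> 0"
    using c0 by real_asymp
  have l2: "(\<lambda>n::nat. real n ^ n * 2 powr ((3 * real n - real n ^ 2) / 4)) \<longlonglongrightarrow> 0"
    by real_asymp
  have cn: "real n / (4 * real a) = c * real n" for n unfolding c_def by simp
  have lim: "B \<longlonglongrightarrow> 0" unfolding B_def cn using tendsto_add[OF l1 l2] by simp
  have ev: "eventually (\<lambda>n. real (card (unique_classes (PQ Q) n)) / real (card (iso_classes n)) \<le> B n) sequentially"
  proof (rule eventually_sequentiallyI[of "8 * a"])
    fix n assume n: "n \<ge> 8 * a"
    show "real (card (unique_classes (PQ Q) n)) / real (card (iso_classes n)) \<le> B n"
      unfolding B_def
      by (rule asym_bound[OF assms(3) n key[OF assms(2) assms(3) assms(4)] iso_lower refl])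
  qed
  have "(\<lambda>n. real (card (unique_classes (PQ Q) n)) / real (card (iso_classes n))) \<longlonglongrightarrow> 0"
    by (rule tendsto_sandwich[OF _ ev tendsto_const lim]) simp
  then show ?thesis unfolding weakly_distinguishing_def .
qed

end
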